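(* Let $P_X$ and an $M$-type distribution $P_{\hat X}$ be defined on the same discrete alphabet $\mathcal{X}$. Then for every $\gamma>0$ and $a>0$, $$E_\gamma(P_{\hat X}\|P_X)\ge1-\gamma\,\mathbb{P}\big[\imath_X(X)<\log(\gamma M)+a\big]-\exp(-a),$$ where $X\sim P_X$.
   Context: A distribution on a discrete set is an $M$-type if all its probabilities are integer multiples of $1/M$. $\imath_X(x):=\log\frac1{P_X(x)}$. $E_\gamma(P\|Q):=\sup_{\mathcal{A}}\{P(\mathcal{A})-\gamma Q(\mathcal{A})\}$. *)

theory Defs
  imports "HOL-Probability.Probability"
begin

definition M_type :: "nat \<Rightarrow> 'a pmf \<Rightarrow> bool" where
  "M_type M P \<longleftrightarrow> (\<forall>x. \<exists>k::nat. pmf P x = real k / real M)"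

definition info_dens :: "'a pmf \<Rightarrow> 'a \<Rightarrow> real" where
  "info_dens P x = ln (1 / pmf P x)"

definition E_gamma :: "real \<Rightarrow> 'a pmf \<Rightarrow> 'a pmf \<Rightarrow> real" where
  "E_gamma \<gamma> P Q = (SUP A. measure_pmf.prob P A - \<gamma> * measure_pmf.prob Q A)"

end

theory Submission
  imports Defs
begin

lemma supp_bound:
  fixes P :: "'a pmf" and M :: nat
  assumes "M > 0" "M_type M P"
  shows "finite (set_pmf P) \<and> card (set_pmf P) \<le> M"
proof -
  have lb: "pmf P x \<ge> 1 / real M" if "x \<in> set_pmf P" for x
  proof -
    obtain k :: nat where k: "pmf P x = real k / real M" using assms(2) unfolding M_type_def by blast
    have "pmf P x > 0" using that by (simp add: pmf_positive)
    hence "k \<ge> 1" using k by (cases k) auto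
    thus ?thesis using k assms(1) by (simp add: divide_right_mono)
  qed
  have cb: "card B \<le> M" if "finite B" "B \<subseteq> set_pmf P" for B
  proof -
    have "real (card B) / real M = (\<Sum>x\<in>B. 1 / real M)" by simp
    also have "\<dots> \<le> (\<Sum>x\<in>B. pmf P x)" using that lb by (intro sum_mono) auto
    also have "\<dots> = measure_pmf.prob P B" using that by (simp add: measure_measure_pmf_finite)
    also have "\<dots> \<le> 1" by simp
    finally show ?thesis using assms(1) by (simp add: divide_le_eq)
  qed
  have fin: "finite (set_pmf P)"
  proof (rule ccontr)
    assume "infinite (set_pmf P)"
    then obtain B where "B \<subseteq> set_pmf P" "finite B" "card B = Suc M"
      using infinite_arbitrarily_large by blast
    thus False using cb by fastforce
  qed
  thus ?thesis using cb by simp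
qed

theorem mainTheorem6:
  fixes PX PXhat :: "'a pmf" and M :: nat and \<gamma> a :: real
  assumes "M > 0" and "M_type M PXhat" and "\<gamma> > 0" and "a > 0"
  shows "E_gamma \<gamma> PXhat PX \<ge>
    1 - \<gamma> * measure_pmf.prob PX {x. info_dens PX x < ln (\<gamma> * real M) + a} - exp (- a)"
proof -
  define A where "A = set_pmf PXhat"
  define c where "c = ln (\<gamma> * real M) + a"
  define S where "S = {x. info_dens PX x < c}"
  define T where "T = A \<inter> {x. info_dens PX x \<ge> c}"
  have gM: "\<gamma> * real M > 0" using assms by simp
  have finA: "finite A" and cardA: "card A \<le> M" using supp_bound[OF assms(1,2)] A_def by auto
  have ec: "exp (- c) = exp (- a) / (\<gamma> * real M)"
    using gM by (simp add: c_def exp_diff exp_minus field_simps)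
  have pt: "pmf PX x \<le> exp (- c)" if "x \<in> T" for x
  proof (cases "pmf PX x > 0")
    case True
    have "c \<le> ln (1 / pmf PX x)" using that unfolding T_def info_dens_def by auto
    also have "\<dots> = - ln (pmf PX x)" using True by (simp add: ln_div)
    finally have "ln (pmf PX x) \<le> - c" by simp
    hence "exp (ln (pmf PX x)) \<le> exp (- c)" by simp
    thus ?thesis using True by simp
  next
    case False thus ?thesis by (smt (verit) exp_gt_zero pmf_nonneg)
  qed
  have finT: "finite T" using finA T_def by simp
  have "measure_pmf.prob PX T = (\<Sum>x\<in>T. pmf PX x)" using finT by (simp add: measure_measure_pmf_finite)
  also have "\<dots> \<le> (\<Sum>x\<in>T. exp (- c))" using pt by (intro sum_mono) auto
  also have "\<dots> = real (card T) * exp (- c)" by simp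
  also have "\<dots> \<le> real M * exp (- c)"
  proof -
    have "card T \<le> card A" using finA T_def by (intro card_mono) auto
    thus ?thesis using cardA by (intro mult_right_mono) auto
  qed
  also have "\<dots> = exp (- a) / \<gamma>" using ec assms(1,3) by (simp add: field_simps)
  finally have PT: "measure_pmf.prob PX T \<le> exp (- a) / \<gamma>" .
  have "A \<subseteq> S \<union> T" unfolding S_def T_def by auto
  hence "measure_pmf.prob PX A \<le> measure_pmf.prob PX (S \<union> T)"
    by (intro measure_pmf.finite_measure_mono) auto
  also have "\<dots> \<le> measure_pmf.prob PX S + measure_pmf.prob PX T"
    by (intro measure_subadditive) (auto simp: measure_pmf.emeasure_finite)
  finally have PA: "measure_pmf.prob PX A \<le> measure_pmf.prob PX S + exp (- a) / \<gamma>" using PT by simp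
  have hatA: "measure_pmf.prob PXhat A = 1" unfolding A_def by (simp add: measure_pmf.prob_eq_1 AE_measure_pmf)
  have bdd: "bdd_above (range (\<lambda>A. measure_pmf.prob PXhat A - \<gamma> * measure_pmf.prob PX A))"
  proof (rule bdd_aboveI2)
    fix B
    show "measure_pmf.prob PXhat B - \<gamma> * measure_pmf.prob PX B \<le> 1"
      using assms(3) by (smt (verit) measure_pmf.prob_le_1 measure_nonneg mult_nonneg_nonneg)
  qed
  have "1 - \<gamma> * measure_pmf.prob PX S - exp (- a) \<le> 1 - \<gamma> * measure_pmf.prob PX A"
  proof -
    have "\<gamma> * measure_pmf.prob PX A \<le> \<gamma> * (measure_pmf.prob PX S + exp (- a) / \<gamma>)"
      using PA assms(3) by (intro mult_left_mono) auto
    also have "\<dots> = \<gamma> * measure_pmf.prob PX S + exp (- a)" using assms(3) by (simp add: field_simps)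
    finally show ?thesis by simp
  qed
  also have "\<dots> = measure_pmf.prob PXhat A - \<gamma> * measure_pmf.prob PX A" using hatA by simp
  also have "\<dots> \<le> E_gamma \<gamma> PXhat PX" unfolding E_gamma_def by (rule cSUP_upper[OF _ bdd]) simp
  finally show ?thesis unfolding S_def c_def .
qed

end
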